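(* Let $t \geq 2$ and $n \geq 1$ be integers and let $x = \left[\frac{nt-1}{t-1}\right]$. Then $x \leq R_{t-1,t}(K_{1,n}) \leq x+1$. Moreover, if $x$ is even, then $R_{t-1,t}(K_{1,n}) = x+1$.
   Context: $[a]$ denotes the integer part (floor) of a real number $a$. $K_{1,n}$ is the star with $n$ edges. For a graph $G$ and integers $1 \leq s < t$, $R_{s,t}(G)$ is the smallest positive integer $N$ such that every coloring of the edges of the complete graph $K_N$ with $t$ colors contains a (not necessarily induced) subgraph isomorphic to $G$ whose edges use at most $s$ distinct colors. *)

theory Defs
  imports Main
begin

text \<open>A (finite simple) graph is a pair (V, E) of a vertex set and a set of
  2-element edges (each edge a subset of V). Vertices of the complete graph K_N
  are 0,...,N-1.\<close>

type_synonym 'v graph = "'v set \<times> 'v set set"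

definition complete_edges :: "nat \<Rightarrow> nat set set" where
  "complete_edges N = {{u, v} | u v. u < N \<and> v < N \<and> u \<noteq> v}"

definition is_coloring :: "nat \<Rightarrow> nat \<Rightarrow> (nat set \<Rightarrow> nat) \<Rightarrow> bool" where
  "is_coloring N t c \<longleftrightarrow> (\<forall>e \<in> complete_edges N. c e < t)"

text \<open>K_N under coloring c contains a (not necessarily induced) copy of G whose
  edges use at most s distinct colors: an injective embedding of the vertices of G
  into the vertices of K_N; the images of the edges of G are edges of K_N.\<close>
definition has_s_colored_copy :: "'v graph \<Rightarrow> nat \<Rightarrow> nat \<Rightarrow> (nat set \<Rightarrow> nat) \<Rightarrow> bool" where
  "has_s_colored_copy G s N c \<longleftrightarrow>
     (\<exists>f. inj_on f (fst G) \<and> f ` fst G \<subseteq> {..<N} \<and>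
          card (c ` ((\<lambda>e. f ` e) ` snd G)) \<le> s)"

definition gen_ramsey :: "nat \<Rightarrow> nat \<Rightarrow> 'v graph \<Rightarrow> nat" where
  "gen_ramsey s t G = (LEAST N. 0 < N \<and>
      (\<forall>c. is_coloring N t c \<longrightarrow> has_s_colored_copy G s N c))"

definition star :: "nat \<Rightarrow> nat graph" where
  "star n = ({0..n}, {{0, i} | i. 1 \<le> i \<and> i \<le> n})"

end

theory Submission imports Defs begin

definition idx :: "nat \<Rightarrow> nat set \<Rightarrow> nat" where
 "idx K e = (if K \<in> e then \<Sum>e - K else (\<Sum>e * ((K+1) div 2)) mod K)"

definition pt :: "nat \<Rightarrow> nat \<Rightarrow> nat \<Rightarrow> nat" where
 "pt K v i = (if v = K then i else if i = v then K else (2*i + K - v) mod K)"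

lemma half_mod: fixes K i :: nat assumes "odd K" "i < K" shows "(2*i*((K+1) div 2)) mod K = i"
proof -
  have "2*((K+1) div 2) = K+1" using assms(1) by presburger
  hence "2*i*((K+1) div 2) = i*K + i" by (metis mult.assoc mult.commute add_mult_distrib2 mult_1_right)
  thus ?thesis using assms(2) by simp
qed

lemma partner:
  assumes "odd K" "v \<le> K" "i < K"
  shows "pt K v i \<le> K \<and> pt K v i \<noteq> v \<and> idx K {v, pt K v i} = i"
proof (cases "v = K")
  case True thus ?thesis using assms by (auto simp: pt_def idx_def)
next
  case vK: False
  show ?thesis
  proof (cases "i = v")
    case True thus ?thesis using assms vK by (auto simp: pt_def idx_def)
  next
    case False
    define w where "w = (2*i + K - v) mod K"
    have K0: "K > 0" using assms by auto
    have wK: "w < K" using K0 by (simp add: w_def)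
    have vl: "v < K" using assms vK by auto
    have s: "(v + w) mod K = (2*i) mod K"
    proof -
      have "(v + w) mod K = (v + (2*i + K - v)) mod K" by (simp add: w_def mod_add_right_eq)
      also have "v + (2*i + K - v) = 2*i + K" using vl by simp
      finally show ?thesis by simp
    qed
    have wv: "w \<noteq> v"
    proof
      assume "w = v"
      hence "(2*v) mod K = (2*i) mod K" using s by (simp add: mult_2)
      hence "(2*v*((K+1) div 2)) mod K = (2*i*((K+1) div 2)) mod K"
        by (metis mod_mult_left_eq)
      thus False using half_mod[OF assms(1) vl] half_mod[OF assms(1) assms(3)] False by simp
    qed
    have "idx K {v,w} = ((v+w) * ((K+1) div 2)) mod K"
      using wK vl wv by (simp add: idx_def)
    also have "\<dots> = ((2*i) * ((K+1) div 2)) mod K" using s by (metis mod_mult_left_eq)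
    also have "\<dots> = i" using half_mod[OF assms(1) assms(3)] by simp
    finally show ?thesis using wK wv vK False by (simp add: pt_def w_def)
  qed
qed


definition colr :: "nat \<Rightarrow> nat \<Rightarrow> nat \<Rightarrow> nat set \<Rightarrow> nat" where
 "colr K t m e = min (idx K e div m) (t - 1)"

lemma construct:
  assumes "odd K" "t \<ge> 1" "t * m \<le> K" "v \<le> K" "j < t"
  shows "m \<le> card {w. w \<le> K \<and> w \<noteq> v \<and> colr K t m {v,w} = j}"
proof -
  define I where "I = {j*m..<j*m+m}"
  have IK: "\<forall>i\<in>I. i < K"
  proof
    fix i assume "i \<in> I"
    hence "i < j*m+m" by (simp add: I_def)
    moreover have "j*m+m \<le> t*m" using assms(5)
      by (metis Suc_leI add.commute mult_Suc mult_le_mono1)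
    ultimately show "i < K" using assms(3) by linarith
  qed
  have inj: "inj_on (pt K v) I"
  proof (rule inj_onI)
    fix a b assume "a \<in> I" "b \<in> I" "pt K v a = pt K v b"
    thus "a = b" using partner[OF assms(1) assms(4)] IK by metis
  qed
  have sub: "pt K v ` I \<subseteq> {w. w \<le> K \<and> w \<noteq> v \<and> colr K t m {v,w} = j}"
  proof
    fix w assume "w \<in> pt K v ` I"
    then obtain i where i: "i \<in> I" "w = pt K v i" by auto
    have p: "w \<le> K \<and> w \<noteq> v \<and> idx K {v,w} = i" using partner[OF assms(1) assms(4)] IK i by auto
    have "m > 0" using i by (simp add: I_def)
    hence "i div m = j" using i(1) by (intro div_nat_eqI) (auto simp: I_def algebra_simps)
    thus "w \<in> {w. w \<le> K \<and> w \<noteq> v \<and> colr K t m {v,w} = j}" using p assms(5)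
      by (simp add: colr_def)
  qed
  have "card (pt K v ` I) = m" using inj by (simp add: card_image I_def)
  moreover have "finite {w. w \<le> K \<and> w \<noteq> v \<and> colr K t m {v,w} = j}" by simp
  ultimately show ?thesis using card_mono[OF _ sub] by simp
qed


lemma no_copy:
  assumes col: "is_coloring N t c" and t1: "t \<ge> 1" and n1: "n \<ge> 1"
    and deg: "\<forall>v<N. \<forall>j<t. N - n \<le> card {w. w<N \<and> w\<noteq>v \<and> c{v,w}=j}"
  shows "\<not> has_s_colored_copy (star n) (t-1) N c"
proof
  assume "has_s_colored_copy (star n) (t-1) N c"
  then obtain f where inj: "inj_on f {0..n}" and fim: "f ` {0..n} \<subseteq> {..<N}"
    and cc: "card (c ` ((\<lambda>e. f ` e) ` {{0, i} | i. 1 \<le> i \<and> i \<le> n})) \<le> t - 1"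
    unfolding has_s_colored_copy_def star_def by auto
  define C where "C = c ` ((\<lambda>e. f ` e) ` {{0, i} | i. 1 \<le> i \<and> i \<le> n})"
  have E: "{{0, i} | i. 1 \<le> i \<and> i \<le> n} = (\<lambda>i. {0,i}) ` {1..n}" by auto
  have Ceq: "C = (\<lambda>i. c {f 0, f i}) ` {1..n}" unfolding C_def E image_image by simp
  have v: "f 0 < N" using fim by (auto simp: image_subset_iff)
  have fi: "\<And>i. i \<in> {1..n} \<Longrightarrow> f i < N \<and> f i \<noteq> f 0"
  proof -
    fix i assume i: "i \<in> {1..n}"
    have "f i \<noteq> f 0" using inj i by (auto dest: inj_onD)
    thus "f i < N \<and> f i \<noteq> f 0" using fim i by (auto simp: image_subset_iff)
  qed
  have Ct: "C \<subseteq> {..<t}"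
  proof
    fix y assume "y \<in> C"
    then obtain i where i: "i \<in> {1..n}" "y = c {f 0, f i}" using Ceq by auto
    have "{f 0, f i} \<in> complete_edges N" using fi[OF i(1)] v unfolding complete_edges_def by blast
    thus "y \<in> {..<t}" using col i unfolding is_coloring_def by auto
  qed
  have "card C < card {..<t}" using cc t1 unfolding C_def by simp
  hence "C \<noteq> {..<t}" by auto
  then obtain j where j: "j < t" "j \<notin> C" using Ct by auto
  define A where "A = {w. w<N \<and> w\<noteq>f 0 \<and> c{f 0,w}=j}"
  define B where "B = {w. w<N \<and> w\<noteq>f 0 \<and> c{f 0,w}\<noteq>j}"
  have AB: "A \<union> B = {..<N} - {f 0}" "A \<inter> B = {}" unfolding A_def B_def by auto
  have "card (A \<union> B) = N - 1" using AB v by simp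
  moreover have "card (A \<union> B) = card A + card B" using AB(2) by (intro card_Un_disjoint) (auto simp: A_def B_def)
  moreover have "N - n \<le> card A" using deg v j unfolding A_def by auto
  moreover have "f ` {1..n} \<subseteq> B" using fi j Ceq unfolding B_def by auto
  hence "card (f ` {1..n}) \<le> card B" by (intro card_mono) (auto simp: B_def)
  moreover have "card (f ` {1..n}) = n" using inj by (subst card_image) (auto intro: inj_on_subset)
  ultimately show False using n1 by linarith
qed


lemma arith1:
  fixes M n t :: nat
  assumes "t \<ge> 2" "n \<ge> 1" "M*(t-1) \<le> n*t - 1"
  shows "t*(M-n) \<le> M - 1"
proof -
  have a: "M*(t-1) = M*t - M" by (simp add: diff_mult_distrib2)
  have b: "t*(M-n) = M*t - n*t" by (simp add: diff_mult_distrib2 mult.commute)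
  have c: "M \<le> M*t" using assms(1) by simp
  have d: "1 \<le> n*t" using assms by simp
  show ?thesis using a b c d assms(3) by linarith
qed

lemma bad_col:
  assumes t2: "t \<ge> 2" and n1: "n \<ge> 1" and N0: "0 < N"
    and Mdef: "M = (if even N then N else N+1)" and Mb: "M*(t-1) \<le> n*t - 1"
  shows "\<exists>c. is_coloring N t c \<and> \<not> has_s_colored_copy (star n) (t-1) N c"
proof -
  define K where "K = M - 1"
  have oK: "odd K" "M = K + 1" using Mdef N0 unfolding K_def by auto
  have tm: "t*(M-n) \<le> K" using arith1[OF t2 n1 Mb] unfolding K_def .
  define c where "c = colr K t (M-n)"
  have col: "is_coloring N t c" unfolding is_coloring_def c_def colr_def using t2 by auto
  have deg: "\<forall>v<N. \<forall>j<t. N - n \<le> card {w. w<N \<and> w\<noteq>v \<and> c{v,w}=j}"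
  proof (intro allI impI)
    fix v j assume v: "v < N" and j: "j < t"
    have vK: "v \<le> K" using v oK Mdef by (auto split: if_splits)
    have h: "M - n \<le> card {w. w \<le> K \<and> w \<noteq> v \<and> c {v,w} = j}"
      using construct[OF oK(1) _ tm vK j] t2 unfolding c_def by simp
    have sub: "{w. w \<le> K \<and> w \<noteq> v \<and> c {v,w} = j} \<subseteq> {w. w<N \<and> w\<noteq>v \<and> c{v,w}=j} \<union> {N..<M}"
      using oK by auto
    have "card {w. w \<le> K \<and> w \<noteq> v \<and> c {v,w} = j} \<le> card ({w. w<N \<and> w\<noteq>v \<and> c{v,w}=j} \<union> {N..<M})"
      by (intro card_mono[OF _ sub]) auto
    also have "\<dots> \<le> card {w. w<N \<and> w\<noteq>v \<and> c{v,w}=j} + card {N..<M}" by (rule card_Un_le)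
    finally show "N - n \<le> card {w. w<N \<and> w\<noteq>v \<and> c{v,w}=j}" using h Mdef
      by (auto split: if_splits)
  qed
  show ?thesis using col no_copy[OF col _ n1 deg] t2 by auto
qed


lemma good:
  assumes t2: "t \<ge> 2" and n1: "n \<ge> 1" and xn: "x \<ge> n" and xb: "n*t \<le> (x+1)*(t-1)"
    and col: "is_coloring (x+1) t c"
  shows "has_s_colored_copy (star n) (t-1) (x+1) c"
proof -
  define A where "A = (\<lambda>j. {w. 1 \<le> w \<and> w \<le> x \<and> c{0,w} = j})"
  have cov: "{1..x} \<subseteq> (\<Union>j\<in>{..<t}. A j)"
  proof
    fix w assume w: "w \<in> {1..x}"
    have "{0,w} \<in> complete_edges (x+1)" using w unfolding complete_edges_def by force
    hence "c{0,w} < t" using col unfolding is_coloring_def by auto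
    thus "w \<in> (\<Union>j\<in>{..<t}. A j)" using w unfolding A_def by auto
  qed
  have "x = card {1..x}" by simp
  also have "\<dots> \<le> card (\<Union>j\<in>{..<t}. A j)" by (intro card_mono[OF _ cov]) (auto simp: A_def)
  also have "\<dots> \<le> (\<Sum>j<t. card (A j))" by (rule card_UN_le) simp
  finally have sx: "x \<le> (\<Sum>j<t. card (A j))" .
  have "\<exists>j<t. card (A j) \<le> x - n"
  proof (rule ccontr)
    assume "\<not> ?thesis"
    hence "\<forall>j<t. x + 1 - n \<le> card (A j)" by auto
    hence "(\<Sum>j<t. x + 1 - n) \<le> (\<Sum>j<t. card (A j))" by (intro sum_mono) auto
    hence "t*(x+1-n) \<le> (\<Sum>j<t. card (A j))" by simp
    moreover have "t*(x+1-n) = t*(x+1) - n*t" by (simp add: diff_mult_distrib2 mult.commute)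
    moreover have "(x+1)*(t-1) = t*(x+1) - (x+1)" by (simp add: diff_mult_distrib2 mult.commute)
    moreover have "x+1 \<le> t*(x+1)" using t2 by (metis le_trans mult_le_mono1 one_le_numeral mult_1)
    moreover have "(\<Sum>j<t. card (A j)) \<le> x"
    proof -
      have "(\<Sum>j<t. card (A j)) = card (\<Union>j\<in>{..<t}. A j)"
        by (rule card_UN_disjoint[symmetric]) (auto simp: A_def)
      also have "\<dots> \<le> card {1..x}" by (intro card_mono) (auto simp: A_def)
      finally show ?thesis by simp
    qed
    ultimately show False using xb xn by linarith
  qed
  then obtain j where j: "j < t" "card (A j) \<le> x - n" by auto
  define B where "B = {1..x} - A j"
  have "card B = x - card (A j)" unfolding B_def
    by (subst card_Diff_subset) (auto simp: A_def)
  hence "n \<le> card B" using j xn by linarith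
  then obtain S where S: "S \<subseteq> B" "card S = n" "finite S" by (rule obtain_subset_with_card_n)
  obtain h where h: "bij_betw h {1..n} S" using finite_same_card_bij[of "{1..n}" S] S by auto
  define f where "f = (\<lambda>i. if i = 0 then 0 else h i)"
  have hS: "\<And>i. i \<in> {1..n} \<Longrightarrow> h i \<in> B" using h S(1) by (auto simp: bij_betw_def)
  have hB: "\<And>i. i \<in> {1..n} \<Longrightarrow> 1 \<le> h i \<and> h i \<le> x \<and> c{0, h i} \<noteq> j"
    using hS unfolding B_def A_def by auto
  have inj: "inj_on f {0..n}"
  proof (rule inj_onI)
    fix a b assume a: "a \<in> {0..n}" and b: "b \<in> {0..n}" and e: "f a = f b"
    show "a = b"
    proof (cases "a = 0 \<or> b = 0")
      case True
      have hp: "\<And>i. 0 < i \<Longrightarrow> i \<le> n \<Longrightarrow> h i \<noteq> 0" using hB by (metis Suc_leI atLeastAtMost_iff not_one_le_zero One_nat_def)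
      show ?thesis using True e hp a b unfolding f_def by (metis atLeastAtMost_iff gr0I)
    next
      case False
      hence "h a = h b" "a \<in> {1..n}" "b \<in> {1..n}" using e a b by (auto simp: f_def)
      thus ?thesis using h by (auto simp: bij_betw_def dest: inj_onD)
    qed
  qed
  have hB': "\<And>i. 0 < i \<Longrightarrow> i \<le> n \<Longrightarrow> h i \<le> x" using hB by (metis Suc_leI atLeastAtMost_iff One_nat_def)
  have fim: "f ` {0..n} \<subseteq> {..<x+1}" using hB' by (auto simp: f_def less_Suc_eq_le)
  have E: "{{0, i} | i. 1 \<le> i \<and> i \<le> n} = (\<lambda>i. {0,i}) ` {1..n}" by auto
  have Ceq: "c ` ((\<lambda>e. f ` e) ` {{0, i} | i. 1 \<le> i \<and> i \<le> n}) = (\<lambda>i. c {0, h i}) ` {1..n}"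
    unfolding E image_image by (rule image_cong) (auto simp: f_def insert_commute)
  have Csub: "(\<lambda>i. c {0, h i}) ` {1..n} \<subseteq> {..<t} - {j}"
  proof
    fix y assume "y \<in> (\<lambda>i. c {0, h i}) ` {1..n}"
    then obtain i where i: "i \<in> {1..n}" "y = c {0, h i}" by auto
    have "{0, h i} \<in> complete_edges (x+1)" using hB[OF i(1)] unfolding complete_edges_def by force
    hence "y < t" using col i unfolding is_coloring_def by auto
    thus "y \<in> {..<t} - {j}" using hB[OF i(1)] i by auto
  qed
  have "card ((\<lambda>i. c {0, h i}) ` {1..n}) \<le> card ({..<t} - {j})" by (intro card_mono[OF _ Csub]) auto
  also have "\<dots> = t - 1" using j by simp
  finally show ?thesis unfolding has_s_colored_copy_def star_def using inj fim Ceq by auto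
qed


theorem corollary1:
  fixes t n x :: nat
  assumes "t \<ge> 2" and "n \<ge> 1"
    and "x = (n * t - 1) div (t - 1)"
  shows "x \<le> gen_ramsey (t - 1) t (star n) \<and> gen_ramsey (t - 1) t (star n) \<le> x + 1
         \<and> (even x \<longrightarrow> gen_ramsey (t - 1) t (star n) = x + 1)"
proof -
  define P where "P = (\<lambda>N. 0 < N \<and> (\<forall>c. is_coloring N t c \<longrightarrow> has_s_colored_copy (star n) (t-1) N c))"
  have R: "gen_ramsey (t - 1) t (star n) = Least P" unfolding gen_ramsey_def P_def by simp
  have t1: "t - 1 > 0" using assms by simp
  have x1: "x * (t-1) \<le> n*t - 1" using assms(3) by simp
  have x2: "n*t - 1 < (x+1)*(t-1)"
  proof -
    have "n*t - 1 = x*(t-1) + (n*t-1) mod (t-1)" using assms(3) by (metis div_mult_mod_eq)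
    moreover have "(n*t-1) mod (t-1) < t - 1" using t1 by simp
    moreover have "(x+1)*(t-1) = x*(t-1) + (t-1)" by simp
    ultimately show ?thesis by linarith
  qed
  have nt: "n*t \<ge> 1" using assms by simp
  have x3: "n*t \<le> (x+1)*(t-1)" using x2 nt by linarith
  have xn: "n \<le> x"
  proof -
    have "n*(t-1) \<le> n*t - 1" using assms by (simp add: diff_mult_distrib2)
    hence "n*(t-1) div (t-1) \<le> (n*t-1) div (t-1)" by (rule div_le_mono)
    thus ?thesis using t1 assms(3) by simp
  qed
  have Px: "P (x+1)" unfolding P_def using good[OF assms(1,2) xn x3] by auto
  have le: "Least P \<le> x + 1" by (rule Least_le[of P, OF Px])
  have PR: "P (Least P)" by (rule LeastI[of P, OF Px])
  have notP: "\<not> P N" if "0 < N" "N \<le> x" "N = x \<longrightarrow> even x" for N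
  proof -
    define M where "M = (if even N then N else N+1)"
    have "M \<le> x" using that by (auto simp: M_def) (metis Suc_leI le_neq_implies_less)
    hence "M*(t-1) \<le> n*t - 1" using x1 by (meson le_trans mult_le_mono1)
    from bad_col[OF assms(1,2) that(1) M_def this] show ?thesis unfolding P_def by auto
  qed
  have ge: "x \<le> Least P"
  proof (rule ccontr)
    assume "\<not> x \<le> Least P"
    hence "Least P < x" by simp
    moreover have "0 < Least P" using PR unfolding P_def by simp
    ultimately show False using notP[of "Least P"] PR by simp
  qed
  have ev: "even x \<longrightarrow> Least P = x + 1"
  proof
    assume e: "even x"
    have "Least P \<noteq> x" using notP[of x] PR e ge xn assms(2) by auto
    thus "Least P = x + 1" using ge le by simp
  qed
  show ?thesis using R le ge ev by simp
qed

end
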